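(* $(M_t)_{t\ge0}$ is a martingale with respect to the natural filtration of the branching process. The limit $M_\star=\lim_{t\to\infty}M_t$ exists almost surely and in $L^2$, and for all $t\in\mathbb N$, $$\mathbf E\big[(M_\star-M_t)^2\big]=\frac{n(\gamma-1)\varrho^t}{m(1-\varrho)}.$$
   Context: Let $(d_i^-)_{1\le i\le n}$, $(d_i^+)_{1\le i\le n}$ be positive integers with $\sum_id_i^-=\sum_id_i^+=m$ and $\min_i\min(d_i^+,d_i^-)\ge2$; $V=\{1,\dots,n\}$. Let $\varrho=\frac1m\sum_i\frac{d_i^-}{d_i^+}$ and $\gamma=\frac1m\sum_i\frac{(d_i^-)^2}{d_i^+}$. Branching process $\mathcal T_\star$: the root $o$ (generation $0$) has mark uniform on $V$; each node $x$ of generation $t$, with mark $i(x)$, independently has exactly $d^-_{i(x)}$ children forming generation $t+1$, whose marks are i.i.d. with the out-degree distribution $\mathbf P(\text{mark}=i)=d_i^+/m$. For a node $x$ of generation $t$ with path $x=x_0,\dots,x_t=o$ to the root, $\mathbf w(x)=\frac{n d^-_{i(x_0)}}{m}\prod_{k=0}^{t-1}\frac1{d^+_{i(x_k)}}$ (empty product $=1$), and $M_t=\sum_{x\text{ in generation }t}\mathbf w(x)$. *)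

theory Defs
  imports "HOL-Probability.Probability"
begin

text \<open>Branching process encoded with Ulam--Harris labels: a potential node is a list
  xs of naturals (the root is the empty list; the children of xs are xs @ [k]).
  mk xs w is the mark of the potential node xs.  The path from xs (generation length xs) to the root is
  take (length xs) xs, ..., take 1 xs, take 0 xs = [].\<close>

definition in_tree :: "(nat \<Rightarrow> nat) \<Rightarrow> (nat list \<Rightarrow> 'a \<Rightarrow> nat) \<Rightarrow> nat list \<Rightarrow> 'a \<Rightarrow> bool" where
  "in_tree din mk xs w \<longleftrightarrow> (\<forall>j<length xs. xs ! j < din (mk (take j xs) w))"

definition generation :: "(nat \<Rightarrow> nat) \<Rightarrow> (nat list \<Rightarrow> 'a \<Rightarrow> nat) \<Rightarrow> nat \<Rightarrow> 'a \<Rightarrow> nat list set" where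
  "generation din mk t w = {xs. length xs = t \<and> in_tree din mk xs w}"

text \<open>weight w(x) = n d^-_{i(x_0)}/m * prod_{k=0}^{t-1} 1/d^+_{i(x_k)}, where x_k = take (t-k) xs\<close>
definition weight :: "nat \<Rightarrow> nat \<Rightarrow> (nat \<Rightarrow> nat) \<Rightarrow> (nat \<Rightarrow> nat) \<Rightarrow> (nat list \<Rightarrow> 'a \<Rightarrow> nat)
    \<Rightarrow> nat list \<Rightarrow> 'a \<Rightarrow> real" where
  "weight n m din dout mk xs w =
     real n * real (din (mk xs w)) / real m * (\<Prod>j\<in>{1..length xs}. 1 / real (dout (mk (take j xs) w)))"

definition Mproc :: "nat \<Rightarrow> nat \<Rightarrow> (nat \<Rightarrow> nat) \<Rightarrow> (nat \<Rightarrow> nat) \<Rightarrow> (nat list \<Rightarrow> 'a \<Rightarrow> nat)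
    \<Rightarrow> nat \<Rightarrow> 'a \<Rightarrow> real" where
  "Mproc n m din dout mk t w = (\<Sum>xs\<in>generation din mk t w. weight n m din dout mk xs w)"

definition obs :: "(nat \<Rightarrow> nat) \<Rightarrow> (nat list \<Rightarrow> 'a \<Rightarrow> nat) \<Rightarrow> nat \<Rightarrow> nat list \<Rightarrow> 'a \<Rightarrow> nat option" where
  "obs din mk t xs w = (if length xs \<le> t \<and> in_tree din mk xs w then Some (mk xs w) else None)"

definition nat_filtration :: "'a measure \<Rightarrow> (nat \<Rightarrow> nat) \<Rightarrow> (nat list \<Rightarrow> 'a \<Rightarrow> nat) \<Rightarrow> nat \<Rightarrow> 'a measure" where
  "nat_filtration M din mk t =
     sigma (space M) {{w \<in> space M. obs din mk t xs w = v} | xs v. True}"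

definition martingale :: "'a measure \<Rightarrow> (nat \<Rightarrow> 'a measure) \<Rightarrow> (nat \<Rightarrow> 'a \<Rightarrow> real) \<Rightarrow> bool" where
  "martingale M F X \<longleftrightarrow>
     (\<forall>t. subalgebra M (F t)) \<and>
     (\<forall>s t. s \<le> t \<longrightarrow> sets (F s) \<subseteq> sets (F t)) \<and>
     (\<forall>t. X t \<in> borel_measurable (F t)) \<and>
     (\<forall>t. integrable M (X t)) \<and>
     (\<forall>s t. s \<le> t \<longrightarrow> (AE w in M. real_cond_exp M (F s) (X t) w = X s w))"

end

theory Submission
  imports Defs
begin


locale comb =
  fixes n m :: nat and din dout :: "nat \<Rightarrow> nat"
begin

definition intree :: "(nat list \<Rightarrow> nat) \<Rightarrow> nat list \<Rightarrow> bool" where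
  "intree v xs \<longleftrightarrow> (\<forall>j<length xs. xs ! j < din (v (take j xs)))"

definition cw :: "(nat list \<Rightarrow> nat) \<Rightarrow> nat list \<Rightarrow> real" where
  "cw v xs = real n / real m * (\<Prod>j\<in>{1..length xs}. 1 / real (dout (v (take j xs))))"

definition gen :: "(nat list \<Rightarrow> nat) \<Rightarrow> nat \<Rightarrow> nat list set" where
  "gen v t = {xs. length xs = t \<and> intree v xs}"

definition MPv :: "nat \<Rightarrow> (nat list \<Rightarrow> nat) \<Rightarrow> real" where
  "MPv t v = (\<Sum>xs\<in>gen v t. real (din (v xs)) * cw v xs)"

definition Qv :: "nat \<Rightarrow> (nat list \<Rightarrow> nat) \<Rightarrow> real" where
  "Qv t v = (\<Sum>xs\<in>gen v t. real (din (v xs)) * (cw v xs)^2)"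

definition fr :: "nat \<Rightarrow> real" where "fr i = real (din i) / real (dout i)"
definition gr :: "nat \<Rightarrow> real" where "gr i = real (din i) / real (dout i) ^ 2"

lemma intree_snoc: "intree v (xs @ [k]) \<longleftrightarrow> intree v xs \<and> k < din (v xs)"
  unfolding intree_def
  by (auto simp: nth_append less_Suc_eq)

lemma cw_snoc: "cw v (xs @ [k]) = cw v xs / real (dout (v (xs @ [k])))"
proof -
  have e: "{1..length (xs @ [k])} = insert (Suc (length xs)) {1..length xs}" by auto
  have "(\<Prod>j\<in>{1..length xs}. 1 / real (dout (v (take j (xs @ [k]))))) =
        (\<Prod>j\<in>{1..length xs}. 1 / real (dout (v (take j xs))))"
    by (rule prod.cong) auto
  then show ?thesis unfolding cw_def e by (simp add: field_simps)
qed

lemma gen_0: "gen v 0 = {[]}"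
  by (auto simp: gen_def intree_def)

lemma gen_Suc: "gen v (Suc t) = (\<lambda>(xs,k). xs @ [k]) ` (SIGMA xs:gen v t. {..<din (v xs)})"
proof safe
  fix ys assume "ys \<in> gen v (Suc t)"
  then have l: "length ys = Suc t" and it: "intree v ys" by (auto simp: gen_def)
  obtain xs k where ys: "ys = xs @ [k]" using l by (cases ys rule: rev_cases) auto
  show "ys \<in> (\<lambda>(xs,k). xs @ [k]) ` (SIGMA xs:gen v t. {..<din (v xs)})"
    using it l unfolding ys by (auto simp: intree_snoc gen_def intro!: image_eqI[where x="(xs,k)"])
qed (auto simp: gen_def intree_snoc)

lemma finite_gen: "finite (gen v t)"
  by (induction t) (auto simp: gen_0 gen_Suc)

lemma sum_gen_Suc:
  "(\<Sum>y\<in>gen v (Suc t). F y) = (\<Sum>xs\<in>gen v t. \<Sum>k<din (v xs). F (xs @ [k]))"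
proof -
  have inj: "inj_on (\<lambda>(xs,k). xs @ [k]) (SIGMA xs:gen v t. {..<din (v xs)})"
    by (auto simp: inj_on_def)
  show ?thesis unfolding gen_Suc
    by (subst sum.reindex[OF inj]) (simp add: sum.Sigma finite_gen split_def)
qed

lemma MPv_alt: "MPv t v = (\<Sum>xs\<in>gen v t. \<Sum>k<din (v xs). cw v xs)"
  unfolding MPv_def by simp

lemma MPv_Suc: "MPv (Suc t) v = (\<Sum>xs\<in>gen v t. \<Sum>k<din (v xs). cw v xs * fr (v (xs @ [k])))"
  unfolding MPv_def sum_gen_Suc cw_snoc fr_def by (simp add: field_simps)

lemma MPv_diff: "MPv (Suc t) v - MPv t v =
   (\<Sum>xs\<in>gen v t. \<Sum>k<din (v xs). cw v xs * (fr (v (xs @ [k])) - 1))"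
  unfolding MPv_Suc MPv_alt[of t] by (simp add: right_diff_distrib sum_subtractf)

lemma Qv_alt: "Qv t v = (\<Sum>xs\<in>gen v t. \<Sum>k<din (v xs). (cw v xs)^2)"
  unfolding Qv_def by simp

lemma Qv_Suc: "Qv (Suc t) v = (\<Sum>xs\<in>gen v t. \<Sum>k<din (v xs). (cw v xs)^2 * gr (v (xs @ [k])))"
  unfolding Qv_def sum_gen_Suc cw_snoc gr_def by (simp add: field_simps power2_eq_square)

lemma cw_nonneg: "0 \<le> cw v xs"
  unfolding cw_def by (intro mult_nonneg_nonneg prod_nonneg) auto

lemma cw_le: "cw v xs \<le> real n / real m"
proof -
  have "(\<Prod>j\<in>{1..length xs}. 1 / real (dout (v (take j xs)))) \<le> 1"
    by (rule prod_le_1) (auto simp: divide_le_eq)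
  moreover have "0 \<le> (\<Prod>j\<in>{1..length xs}. 1 / real (dout (v (take j xs))))"
    by (intro prod_nonneg) auto
  ultimately show ?thesis unfolding cw_def
    by (intro mult_left_le) auto
qed

lemma intree_local:
  assumes "\<forall>ys. length ys < length xs \<longrightarrow> v ys = v' ys"
  shows "intree v xs = intree v' xs"
  using assms unfolding intree_def by auto

lemma cw_local:
  assumes "\<forall>ys. length ys \<le> length xs \<longrightarrow> v ys = v' ys"
  shows "cw v xs = cw v' xs"
  using assms unfolding cw_def by (auto intro!: prod.cong)

lemma gen_local:
  assumes "\<forall>ys. length ys < t \<longrightarrow> v ys = v' ys"
  shows "gen v t = gen v' t"
  using assms intree_local[of xs v v' for xs] unfolding gen_def by auto

lemma MPv_local:
  assumes "\<forall>ys. length ys \<le> t \<longrightarrow> v ys = v' ys"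
  shows "MPv t v = MPv t v'"
  unfolding MPv_def using assms gen_local[of t v v'] cw_local[of _ v v']
  by (intro sum.cong) (auto simp: gen_def)

lemma Qv_local:
  assumes "\<forall>ys. length ys \<le> t \<longrightarrow> v ys = v' ys"
  shows "Qv t v = Qv t v'"
  unfolding Qv_def using assms gen_local[of t v v'] cw_local[of _ v v']
  by (intro sum.cong) (auto simp: gen_def)

definition Lst :: "nat \<Rightarrow> nat \<Rightarrow> nat list set" where
  "Lst K t = {xs. length xs = t \<and> set xs \<subseteq> {..<K}}"

lemma finite_Lst: "finite (Lst K t)"
  unfolding Lst_def using finite_lists_length_eq[of "{..<K}" t] by (simp add: conj_commute)

definition psi :: "nat list \<Rightarrow> nat \<Rightarrow> (nat list \<Rightarrow> nat) \<Rightarrow> real" where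
  "psi xs k v = (if intree v xs \<and> k < din (v xs) then cw v xs else 0)"

lemma gen_sub_Lst:
  assumes "\<forall>ys. din (v ys) \<le> D"
  shows "gen v t \<subseteq> Lst D t"
proof
  fix xs assume "xs \<in> gen v t"
  then have "length xs = t" "\<forall>j<length xs. xs ! j < din (v (take j xs))"
    by (auto simp: gen_def intree_def)
  then show "xs \<in> Lst D t" unfolding Lst_def
    using assms apply (auto simp: in_set_conv_nth) by (meson less_le_trans)
qed

lemma sum_gen_Lst:
  assumes "\<forall>ys. din (v ys) \<le> D"
  shows "(\<Sum>xs\<in>gen v t. \<Sum>k<din (v xs). F xs k) =
     (\<Sum>xs\<in>Lst D t. \<Sum>k<D. if intree v xs \<and> k < din (v xs) then F xs k else 0)"
proof -
  have "(\<Sum>xs\<in>Lst D t. \<Sum>k<D. if intree v xs \<and> k < din (v xs) then F xs k else 0) =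
        (\<Sum>xs\<in>Lst D t. if intree v xs then (\<Sum>k<din (v xs). F xs k) else 0)"
  proof (rule sum.cong[OF refl])
    fix xs
    have "(\<Sum>k<D. if intree v xs \<and> k < din (v xs) then F xs k else 0) =
          (\<Sum>k\<in>{k\<in>{..<D}. intree v xs \<and> k < din (v xs)}. F xs k)"
      by (rule sum.inter_filter[symmetric]) simp
    also have "{k\<in>{..<D}. intree v xs \<and> k < din (v xs)} = (if intree v xs then {..<din (v xs)} else {})"
      using assms[rule_format, of xs] by auto
    finally show "(\<Sum>k<D. if intree v xs \<and> k < din (v xs) then F xs k else 0) =
        (if intree v xs then (\<Sum>k<din (v xs). F xs k) else 0)" by simp
  qed
  also have "\<dots> = (\<Sum>xs\<in>{xs\<in>Lst D t. intree v xs}. \<Sum>k<din (v xs). F xs k)"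
    by (simp add: sum.inter_filter finite_Lst)
  also have "{xs\<in>Lst D t. intree v xs} = gen v t"
    using gen_sub_Lst[OF assms, of t] by (auto simp: gen_def Lst_def)
  finally show ?thesis by simp
qed

lemma MPv_Lst:
  assumes "\<forall>ys. din (v ys) \<le> D"
  shows "MPv t v = (\<Sum>xs\<in>Lst D t. \<Sum>k<D. psi xs k v)"
  unfolding MPv_alt sum_gen_Lst[OF assms] psi_def by (intro sum.cong) auto

lemma MPv_diff_Lst:
  assumes "\<forall>ys. din (v ys) \<le> D"
  shows "MPv (Suc t) v - MPv t v = (\<Sum>xs\<in>Lst D t. \<Sum>k<D. psi xs k v * (fr (v (xs @ [k])) - 1))"
  unfolding MPv_diff sum_gen_Lst[OF assms] psi_def by (intro sum.cong) auto

lemma Qv_Lst: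
  assumes "\<forall>ys. din (v ys) \<le> D"
  shows "Qv t v = (\<Sum>xs\<in>Lst D t. \<Sum>k<D. (psi xs k v)^2)"
  unfolding Qv_alt sum_gen_Lst[OF assms] psi_def by (intro sum.cong) auto

lemma Qv_Suc_Lst:
  assumes "\<forall>ys. din (v ys) \<le> D"
  shows "Qv (Suc t) v = (\<Sum>xs\<in>Lst D t. \<Sum>k<D. (psi xs k v)^2 * gr (v (xs @ [k])))"
  unfolding Qv_Suc sum_gen_Lst[OF assms] psi_def by (intro sum.cong) auto

lemma psi_local:
  assumes "\<forall>ys. length ys \<le> length xs \<longrightarrow> v ys = v' ys"
  shows "psi xs k v = psi xs k v'"
  using assms intree_local[of xs v v'] cw_local[of xs v v'] unfolding psi_def by auto

lemma psi_bound: "\<bar>psi xs k v\<bar> \<le> real n / real m"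
  using cw_le cw_nonneg unfolding psi_def by auto

lemma intree_prefix: "intree v xs \<Longrightarrow> j \<le> length xs \<Longrightarrow> intree v (take j xs)"
  unfolding intree_def by auto

lemma intree_trunc:
  assumes "length xs \<le> t"
  shows "intree (\<lambda>ys. if length ys \<le> t \<and> intree v ys then v ys else 0) xs = intree v xs"
proof
  let ?v = "\<lambda>ys. if length ys \<le> t \<and> intree v ys then v ys else 0"
  assume a: "intree v xs"
  have "\<forall>j<length xs. ?v (take j xs) = v (take j xs)"
    using intree_prefix[OF a] assms by auto
  then show "intree ?v xs" using a unfolding intree_def by auto
next
  let ?v = "\<lambda>ys. if length ys \<le> t \<and> intree v ys then v ys else 0"
  assume a: "intree ?v xs"
  have "\<forall>j\<le>length xs. intree v (take j xs)"
  proof (intro allI impI)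
    fix j assume "j \<le> length xs"
    then show "intree v (take j xs)"
    proof (induction j)
      case 0 then show ?case by (simp add: intree_def)
    next
      case (Suc j)
      then have IH: "intree v (take j xs)" and jl: "j < length xs" by auto
      have tk: "take (Suc j) xs = take j xs @ [xs ! j]" using jl by (simp add: take_Suc_conv_app_nth)
      have "xs ! j < din (?v (take j xs))" using a jl unfolding intree_def by auto
      then have "xs ! j < din (v (take j xs))" using IH jl assms by auto
      then show ?case unfolding tk intree_snoc using IH by simp
    qed
  qed
  then show "intree v xs" by (metis order_refl take_all)
qed

lemma MPv_trunc:
  "MPv t (\<lambda>ys. if length ys \<le> t \<and> intree v ys then v ys else 0) = MPv t v"
proof -
  let ?v = "\<lambda>ys. if length ys \<le> t \<and> intree v ys then v ys else 0"
  have g: "gen ?v t = gen v t" unfolding gen_def using intree_trunc[of _ t v] by auto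
  show ?thesis unfolding MPv_def g
  proof (rule sum.cong[OF refl])
    fix xs assume "xs \<in> gen v t"
    then have l: "length xs = t" and it: "intree v xs" by (auto simp: gen_def)
    have "cw ?v xs = cw v xs" unfolding cw_def
      using intree_prefix[OF it] l by (intro arg_cong[where f="\<lambda>x. _ * x"] prod.cong) auto
    then show "real (din (?v xs)) * cw ?v xs = real (din (v xs)) * cw v xs" using l it by simp
  qed
qed

end



abbreviation PM :: "nat list set \<Rightarrow> (nat list \<Rightarrow> nat) measure" where
  "PM J \<equiv> PiM J (\<lambda>_. count_space UNIV)"

lemma coord_meas:
  fixes F :: "nat \<Rightarrow> real"
  assumes "ys \<in> J"
  shows "(\<lambda>v. F (v ys)) \<in> borel_measurable (PM J)"
  by (rule measurable_compose[OF measurable_component_singleton[OF assms]]) simp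

context comb begin

lemma cw_meas:
  assumes "{ys. length ys \<le> length xs} \<subseteq> J"
  shows "(\<lambda>v. cw v xs) \<in> borel_measurable (PM J)"
  unfolding cw_def
  by (intro borel_measurable_times borel_measurable_const borel_measurable_prod coord_meas)
     (use assms in auto)

lemma intree_ind: "(if intree v xs then 1 else (0::real)) =
   (\<Prod>j<length xs. if xs ! j < din (v (take j xs)) then 1 else 0)"
  unfolding intree_def by (induction xs rule: rev_induct)
    (auto simp: nth_append prod.lessThan_Suc take_Suc_conv_app_nth less_Suc_eq intro!: prod.cong)

lemma intree_meas:
  assumes "{ys. length ys \<le> length xs} \<subseteq> J"
  shows "(\<lambda>v. if intree v xs then 1 else (0::real)) \<in> borel_measurable (PM J)"
  unfolding intree_ind
  by (intro borel_measurable_prod coord_meas) (use assms in auto)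

lemma psi_alt: "psi xs k v = (if intree v xs then 1 else 0) * (if k < din (v xs) then 1 else 0) * cw v xs"
  unfolding psi_def by auto

lemma psi_meas:
  assumes "{ys. length ys \<le> length xs} \<subseteq> J"
  shows "(\<lambda>v. psi xs k v) \<in> borel_measurable (PM J)"
  unfolding psi_alt
  by (intro borel_measurable_times intree_meas cw_meas coord_meas[where F="\<lambda>i. if k < din i then 1 else 0"])
     (use assms in auto)

lemma MPv_meas:
  assumes "{ys. length ys \<le> t} \<subseteq> J"
  shows "MPv t \<in> borel_measurable (PM J)"
proof (rule borel_measurable_LIMSEQ_real)
  define S where "S K v = (\<Sum>xs\<in>Lst K t. (if intree v xs then 1 else 0) * real (din (v xs)) * cw v xs)" for K v
  show "S K \<in> borel_measurable (PM J)" for K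
    unfolding S_def
    by (intro borel_measurable_sum borel_measurable_times intree_meas cw_meas coord_meas)
       (use assms in \<open>auto simp: Lst_def\<close>)
  fix v assume "v \<in> space (PM J)"
  define K0 where "K0 = Suc (Max (\<Union>xs\<in>gen v t. set xs))"
  have fin: "finite (\<Union>xs\<in>gen v t. set xs)" using finite_gen by auto
  have "S K v = MPv t v" if "K \<ge> K0" for K
  proof -
    have sub: "gen v t \<subseteq> Lst K t"
    proof
      fix xs assume xs: "xs \<in> gen v t"
      have "x < K" if "x \<in> set xs" for x
        using Max_ge[OF fin, of x] that xs \<open>K \<ge> K0\<close> unfolding K0_def by fastforce
      then show "xs \<in> Lst K t" using xs by (auto simp: Lst_def gen_def)
    qed
    have "S K v = (\<Sum>xs\<in>{xs\<in>Lst K t. intree v xs}. real (din (v xs)) * cw v xs)"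
      unfolding S_def by (subst sum.inter_filter) (auto simp: finite_Lst intro!: sum.cong)
    also have "{xs\<in>Lst K t. intree v xs} = gen v t" using sub by (auto simp: gen_def Lst_def)
    finally show ?thesis unfolding MPv_def .
  qed
  then show "(\<lambda>K. S K v) \<longlonglongrightarrow> MPv t v"
    by (intro tendsto_eventually eventually_sequentiallyI[of K0]) auto
qed

end



lemma Cons_nonempty: "xs @ [k] \<noteq> []" by simp


locale bp = prob_space M + comb n m din dout for M :: "'a measure" and n m din dout +
  fixes mk :: "nat list \<Rightarrow> 'a \<Rightarrow> nat"
  assumes m_def: "m = (\<Sum>i\<in>{1..n}. din i)"
    and sums: "(\<Sum>i\<in>{1..n}. dout i) = m"
    and degs: "\<forall>i\<in>{1..n}. din i \<ge> 2 \<and> dout i \<ge> 2"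
    and indep: "indep_vars (\<lambda>_. count_space UNIV) mk UNIV"
    and marks: "\<forall>xs. AE w in M. mk xs w \<in> {1..n}"
    and root_law: "\<forall>i\<in>{1..n}. measure M {w \<in> space M. mk [] w = i} = 1 / real n"
    and child_law: "\<forall>xs i. xs \<noteq> [] \<longrightarrow> i \<in> {1..n} \<longrightarrow>
                      measure M {w \<in> space M. mk xs w = i} = real (dout i) / real m"
begin

definition D :: nat where "D = Max (din ` {1..n})"
definition vec :: "nat list set \<Rightarrow> 'a \<Rightarrow> nat list \<Rightarrow> nat" where
  "vec J w = restrict (\<lambda>xs. mk xs w) J"
abbreviation mkv :: "'a \<Rightarrow> nat list \<Rightarrow> nat" where "mkv w \<equiv> (\<lambda>xs. mk xs w)"
abbreviation It :: "nat \<Rightarrow> nat list set" where "It t \<equiv> {ys. length ys \<le> t}"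
definition \<rho> :: real where "\<rho> = (1 / real m) * (\<Sum>i\<in>{1..n}. real (din i) / real (dout i))"
definition \<gamma> :: real where "\<gamma> = (1 / real m) * (\<Sum>i\<in>{1..n}. real (din i) ^ 2 / real (dout i))"

lemma n_pos: "n \<ge> 1"
proof (rule ccontr)
  assume "\<not> n \<ge> 1"
  then have "n = 0" by simp
  then have "AE w in M. False" using marks by auto
  then show False by (simp add: AE_False)
qed

lemma m_ge: "m \<ge> 2 * n"
proof -
  have "(\<Sum>i\<in>{1..n}. 2) \<le> (\<Sum>i\<in>{1..n}. din i)" using degs by (intro sum_mono) auto
  then show ?thesis unfolding m_def by simp
qed

lemma m_pos: "real m > 0" using m_ge n_pos by simp

lemma din_le_D: "i \<in> {1..n} \<Longrightarrow> din i \<le> D"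
  unfolding D_def by (intro Max_ge) auto

lemma good: "AE w in M. \<forall>xs. mk xs w \<in> {1..n}"
  using marks by (subst AE_all_countable) auto

lemma goodD: "AE w in M. \<forall>ys. din (mk ys w) \<le> D"
  using good by eventually_elim (auto intro: din_le_D)

lemma mk_meas[measurable]: "mk xs \<in> measurable M (count_space UNIV)"
  using indep unfolding indep_vars_def by auto

lemma vec_meas[measurable]: "vec J \<in> measurable M (PM J)"
  unfolding vec_def by (intro measurable_restrict) simp

lemma mkv_meas[measurable]: "mkv \<in> measurable M (PM UNIV)"
proof -
  have "vec UNIV = mkv" unfolding vec_def restrict_def by auto
  then show ?thesis using vec_meas[of UNIV] by simp
qed

lemma vec_local: "\<forall>ys. length ys \<le> t \<longrightarrow> vec (It t) w ys = mk ys w"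
  unfolding vec_def by simp

lemma fun_mk_meas[measurable]: "(\<lambda>w. (g::nat\<Rightarrow>real) (mk xs w)) \<in> borel_measurable M"
  by (rule measurable_compose[OF mk_meas]) simp

lemma bound_mk: "AE w in M. \<bar>(g::nat\<Rightarrow>real) (mk xs w)\<bar> \<le> (\<Sum>i\<in>{1..n}. \<bar>g i\<bar>)"
  using marks[rule_format, of xs]
  by eventually_elim (rule member_le_sum, auto)

lemma int_mk: "integrable M (\<lambda>w. (g::nat\<Rightarrow>real) (mk xs w))"
  by (rule integrable_const_bound[OF _ fun_mk_meas]) (use bound_mk in auto)

lemma disc_int: "(\<integral>w. (g::nat\<Rightarrow>real) (mk xs w) \<partial>M) =
   (\<Sum>i\<in>{1..n}. g i * measure M {w \<in> space M. mk xs w = i})"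
proof -
  have sets: "{w \<in> space M. mk xs w = i} \<in> sets M" for i by measurable
  have "(\<integral>w. g (mk xs w) \<partial>M) = (\<integral>w. (\<Sum>i\<in>{1..n}. g i * indicator {w \<in> space M. mk xs w = i} w) \<partial>M)"
  proof (rule integral_cong_AE)
    show "AE w in M. g (mk xs w) = (\<Sum>i\<in>{1..n}. g i * indicator {w \<in> space M. mk xs w = i} w)"
      using marks[rule_format, of xs] AE_space
    proof eventually_elim
      case (elim w)
      have "(\<Sum>i\<in>{1..n}. g i * indicator {w \<in> space M. mk xs w = i} w) =
            (\<Sum>i\<in>{1..n}. if i = mk xs w then g i else 0)"
        using elim by (intro sum.cong) (auto simp: indicator_def)
      also have "\<dots> = g (mk xs w)" using elim by (simp add: sum.delta')
      finally show ?case by simp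
    qed
  qed (use sets in auto)
  also have "\<dots> = (\<Sum>i\<in>{1..n}. \<integral>w. g i * indicator {w \<in> space M. mk xs w = i} w \<partial>M)"
    by (rule Bochner_Integration.integral_sum) (use sets in \<open>auto intro!: integrable_real_indicator simp: less_top[symmetric]\<close>)
  also have "\<dots> = (\<Sum>i\<in>{1..n}. g i * measure M {w \<in> space M. mk xs w = i})"
    using sets by (intro sum.cong) auto
  finally show ?thesis .
qed

lemma E_child: "y \<noteq> [] \<Longrightarrow> (\<integral>w. (g::nat\<Rightarrow>real) (mk y w) \<partial>M) = (\<Sum>i\<in>{1..n}. g i * real (dout i) / real m)"
  unfolding disc_int using child_law by (intro sum.cong) auto

lemma E_root: "(\<integral>w. (g::nat\<Rightarrow>real) (mk [] w) \<partial>M) = (\<Sum>i\<in>{1..n}. g i / real n)"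
  unfolding disc_int using root_law by (intro sum.cong) auto

lemma dout_pos: "i \<in> {1..n} \<Longrightarrow> real (dout i) > 0" using degs by force

lemma E_fr: "y \<noteq> [] \<Longrightarrow> (\<integral>w. fr (mk y w) \<partial>M) = 1"
proof -
  assume y: "y \<noteq> []"
  have "(\<Sum>i\<in>{1..n}. fr i * real (dout i) / real m) = (\<Sum>i\<in>{1..n}. real (din i) / real m)"
    using dout_pos by (intro sum.cong) (auto simp: fr_def)
  also have "\<dots> = 1" using m_pos by (simp add: sum_divide_distrib[symmetric] m_def)
  finally show ?thesis using E_child[OF y] by simp
qed

lemma E_fr1: "y \<noteq> [] \<Longrightarrow> (\<integral>w. fr (mk y w) - 1 \<partial>M) = 0"
  using E_fr[of y] int_mk[of fr y] by (simp add: prob_space)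

lemma E_fr2: "y \<noteq> [] \<Longrightarrow> (\<integral>w. (fr (mk y w) - 1)^2 \<partial>M) = \<gamma> - 1"
proof -
  assume y: "y \<noteq> []"
  have "(\<Sum>i\<in>{1..n}. (fr i - 1)^2 * real (dout i) / real m) =
        (\<Sum>i\<in>{1..n}. (1 / real m) * (real (din i) ^ 2 / real (dout i)) - 2 * (real (din i) / real m)
            + real (dout i) / real m)"
    using dout_pos m_pos by (intro sum.cong) (auto simp: fr_def field_simps power2_eq_square)
  also have "\<dots> = \<gamma> - 2 * (\<Sum>i\<in>{1..n}. real (din i)) / real m + (\<Sum>i\<in>{1..n}. real (dout i)) / real m"
    unfolding \<gamma>_def by (simp add: sum.distrib sum_subtractf sum_distrib_left sum_divide_distrib)
  also have "\<dots> = \<gamma> - 1"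
  proof -
    have "(\<Sum>i\<in>{1..n}. real (din i)) = real m" "(\<Sum>i\<in>{1..n}. real (dout i)) = real m"
      using sums unfolding m_def by (simp_all flip: of_nat_sum)
    then show ?thesis using m_pos by simp
  qed
  finally show ?thesis using E_child[OF y, of "\<lambda>i. (fr i - 1)^2"] by simp
qed

lemma E_gr: "y \<noteq> [] \<Longrightarrow> (\<integral>w. gr (mk y w) \<partial>M) = \<rho>"
proof -
  assume y: "y \<noteq> []"
  have "(\<Sum>i\<in>{1..n}. gr i * real (dout i) / real m) = (\<Sum>i\<in>{1..n}. (1/real m) * (real (din i) / real (dout i)))"
    using dout_pos by (intro sum.cong) (auto simp: gr_def field_simps power2_eq_square)
  then show ?thesis using E_child[OF y, of gr] unfolding \<rho>_def by (simp add: sum_distrib_left)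
qed

lemma E_din_root: "(\<integral>w. real (din (mk [] w)) \<partial>M) = real m / real n"
  using E_root[of "\<lambda>i. real (din i)"] by (simp add: m_def sum_divide_distrib[symmetric])

lemma H_meas: "H \<in> borel_measurable (PM J) \<Longrightarrow> (\<lambda>w. H (vec J w)) \<in> borel_measurable M"
  by (rule measurable_compose[OF vec_meas])

lemma H_int: "(H::(nat list \<Rightarrow> nat) \<Rightarrow> real) \<in> borel_measurable (PM J) \<Longrightarrow> AE w in M. \<bar>H (vec J w)\<bar> \<le> B \<Longrightarrow>
    integrable M (\<lambda>w. H (vec J w))"
  by (intro integrable_const_bound[where B=B] H_meas) auto

lemma IND:
  fixes H :: "(nat list \<Rightarrow> nat) \<Rightarrow> real" and g :: "nat \<Rightarrow> real"
  assumes y: "y \<notin> J" and H: "H \<in> borel_measurable (PM J)" and B: "AE w in M. \<bar>H (vec J w)\<bar> \<le> B"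
  shows "integrable M (\<lambda>w. H (vec J w) * g (mk y w))"
    and "(\<integral>w. H (vec J w) * g (mk y w) \<partial>M) = (\<integral>w. H (vec J w) \<partial>M) * (\<integral>w. g (mk y w) \<partial>M)"
proof -
  have iv: "indep_var (PM J) (vec J) (PM {y}) (vec {y})"
    using indep_var_restrict[OF indep, of J "{y}"] y unfolding vec_def by auto
  have iv2: "indep_var borel (H \<circ> vec J) borel ((\<lambda>v. g (v y)) \<circ> vec {y})"
    by (rule indep_var_compose[OF iv H coord_meas]) simp
  have e: "((\<lambda>v. g (v y)) \<circ> vec {y}) = (\<lambda>w. g (mk y w))" by (auto simp: vec_def)
  have iv3: "indep_var borel (\<lambda>w. H (vec J w)) borel (\<lambda>w. g (mk y w))"
    using iv2 unfolding e by (simp add: comp_def)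
  have i1: "integrable M (\<lambda>w. H (vec J w))" by (rule H_int[OF H B])
  show "integrable M (\<lambda>w. H (vec J w) * g (mk y w))"
    by (rule indep_var_integrable[OF iv3 i1 int_mk])
  show "(\<integral>w. H (vec J w) * g (mk y w) \<partial>M) = (\<integral>w. H (vec J w) \<partial>M) * (\<integral>w. g (mk y w) \<partial>M)"
    by (rule indep_var_lebesgue_integral[OF iv3 i1 int_mk])
qed

abbreviation Mt :: "nat \<Rightarrow> 'a \<Rightarrow> real" where "Mt t w \<equiv> MPv t (mkv w)"
abbreviation Dl :: "nat \<Rightarrow> 'a \<Rightarrow> real" where "Dl t w \<equiv> Mt (Suc t) w - Mt t w"

lemma Mt_meas: "(\<lambda>w. Mt t w) \<in> borel_measurable M"
  by (rule measurable_compose[OF mkv_meas MPv_meas]) auto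

lemma Dl_meas: "(\<lambda>w. Dl t w) \<in> borel_measurable M"
  using Mt_meas[of t] Mt_meas[of "Suc t"] by measurable

lemma psi_vec: "length xs = t \<Longrightarrow> psi xs k (vec (It t) w) = psi xs k (mkv w)"
  by (rule psi_local) (auto simp: vec_def)

lemma Dl_AE: "AE w in M. Dl t w =
  (\<Sum>xs\<in>Lst D t. \<Sum>k<D. psi xs k (vec (It t) w) * (fr (mk (xs @ [k]) w) - 1))"
  using goodD
proof eventually_elim
  case (elim w)
  show ?case unfolding MPv_diff_Lst[OF elim]
    by (intro sum.cong refl) (simp add: psi_vec Lst_def)
qed

lemma fr_bound: "AE w in M. \<bar>fr (mk y w) - 1\<bar> \<le> (\<Sum>i\<in>{1..n}. \<bar>fr i\<bar>) + 1"
  using bound_mk[of fr y] by eventually_elim auto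

lemma KEY:
  fixes H :: "(nat list \<Rightarrow> nat) \<Rightarrow> real"
  assumes H: "H \<in> borel_measurable (PM (It t))" and B: "AE w in M. \<bar>H (vec (It t) w)\<bar> \<le> B"
  shows "(\<integral>w. H (vec (It t) w) * Dl t w \<partial>M) = 0"
proof -
  let ?J = "It t"
  define F where "F xs k w = (H (vec ?J w) * psi xs k (vec ?J w)) * (fr (mk (xs @ [k]) w) - 1)" for xs k w
  have HP: "(\<lambda>v. H v * psi xs k v) \<in> borel_measurable (PM ?J)" if "xs \<in> Lst D t" for xs k
    using that by (intro borel_measurable_times H psi_meas) (auto simp: Lst_def)
  have HB: "AE w in M. \<bar>H (vec ?J w) * psi xs k (vec ?J w)\<bar> \<le> B * (real n / real m)" for xs k
    using B
  proof eventually_elim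
    case (elim w)
    show ?case unfolding abs_mult
      by (rule mult_mono[OF elim psi_bound]) (use elim in auto)
  qed
  have yJ: "xs @ [k] \<notin> ?J" if "xs \<in> Lst D t" for xs k using that by (auto simp: Lst_def)
  have Fint: "integrable M (F xs k)" if "xs \<in> Lst D t" for xs k
    unfolding F_def by (rule IND(1)[where g="\<lambda>i. fr i - 1", OF yJ[OF that] HP[OF that] HB])
  have F0: "(\<integral>w. F xs k w \<partial>M) = 0" if "xs \<in> Lst D t" for xs k
    unfolding F_def IND(2)[where g="\<lambda>i. fr i - 1", OF yJ[OF that] HP[OF that] HB] E_fr1[OF Cons_nonempty] by simp
  have "(\<integral>w. H (vec ?J w) * Dl t w \<partial>M) = (\<integral>w. (\<Sum>xs\<in>Lst D t. \<Sum>k<D. F xs k w) \<partial>M)"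
  proof (rule integral_cong_AE)
    show "(\<lambda>w. H (vec ?J w) * Dl t w) \<in> borel_measurable M"
      using H_meas[OF H] Dl_meas by measurable
    show "(\<lambda>w. \<Sum>xs\<in>Lst D t. \<Sum>k<D. F xs k w) \<in> borel_measurable M"
      using Fint by (intro borel_measurable_sum) auto
    show "AE w in M. H (vec ?J w) * Dl t w = (\<Sum>xs\<in>Lst D t. \<Sum>k<D. F xs k w)"
      using Dl_AE[of t] by eventually_elim (simp add: F_def sum_distrib_left mult.assoc)
  qed
  also have "\<dots> = (\<Sum>xs\<in>Lst D t. \<integral>w. (\<Sum>k<D. F xs k w) \<partial>M)"
    by (rule Bochner_Integration.integral_sum) (use Fint in auto)
  also have "\<dots> = (\<Sum>xs\<in>Lst D t. \<Sum>k<D. \<integral>w. F xs k w \<partial>M)"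
    by (intro sum.cong refl Bochner_Integration.integral_sum) (use Fint in auto)
  also have "\<dots> = 0" using F0 by simp
  finally show ?thesis .
qed

lemma psi_vec_meas: assumes "length xs \<le> t" shows "(\<lambda>w. psi xs k (vec (It t) w)) \<in> borel_measurable M"
  by (intro H_meas psi_meas) (use assms in auto)

lemma psi_sq_bound: "(psi xs k v)^2 \<le> (real n / real m)^2"
proof -
  have "\<bar>psi xs k v\<bar>^2 \<le> (real n / real m)^2" using psi_bound[of xs k v] by (intro power_mono) auto
  then show ?thesis by simp
qed

lemma psi_vec_bound: "AE w in M. \<bar>psi xs k (vec J w)\<bar> \<le> real n / real m"
  using psi_bound by auto

definition q :: "nat \<Rightarrow> real" where
  "q t = (\<integral>w. (\<Sum>xs\<in>Lst D t. \<Sum>k<D. (psi xs k (vec (It t) w))^2) \<partial>M)"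

lemma psi2_int: "length xs \<le> t \<Longrightarrow> integrable M (\<lambda>w. (psi xs k (vec (It t) w))^2)"
proof -
  assume l: "length xs \<le> t"
  have "{ys. length ys \<le> length xs} \<subseteq> It t" using l by auto
  from psi_meas[OF this, of k] have "(\<lambda>v. (psi xs k v)^2) \<in> borel_measurable (PM (It t))"
    by measurable
  moreover have "AE w in M. \<bar>(psi xs k (vec (It t) w))^2\<bar> \<le> (real n / real m)^2"
    using psi_sq_bound by auto
  ultimately show ?thesis by (rule H_int[where H="\<lambda>v. (psi xs k v)^2"])
qed

lemma q_sum: "q t = (\<Sum>xs\<in>Lst D t. \<Sum>k<D. \<integral>w. (psi xs k (vec (It t) w))^2 \<partial>M)"
  unfolding q_def
  by (subst Bochner_Integration.integral_sum, use psi2_int in \<open>force simp: Lst_def\<close>,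
      intro sum.cong refl Bochner_Integration.integral_sum, use psi2_int in \<open>auto simp: Lst_def\<close>)

lemma q_Suc: "q (Suc t) = \<rho> * q t"
proof -
  have "q (Suc t) = (\<integral>w. (\<Sum>xs\<in>Lst D t. \<Sum>k<D. (psi xs k (vec (It t) w))^2 * gr (mk (xs @ [k]) w)) \<partial>M)"
    unfolding q_def
  proof (rule integral_cong_AE)
    show "(\<lambda>w. \<Sum>xs\<in>Lst D (Suc t). \<Sum>k<D. (psi xs k (vec (It (Suc t)) w))\<^sup>2) \<in> borel_measurable M"
      using psi2_int by (intro borel_measurable_sum) (auto simp: Lst_def)
    show "(\<lambda>w. \<Sum>xs\<in>Lst D t. \<Sum>k<D. (psi xs k (vec (It t) w))\<^sup>2 * gr (mk (xs @ [k]) w)) \<in> borel_measurable M"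
      using psi2_int by (intro borel_measurable_sum borel_measurable_times fun_mk_meas) (auto simp: Lst_def)
    show "AE w in M. (\<Sum>xs\<in>Lst D (Suc t). \<Sum>k<D. (psi xs k (vec (It (Suc t)) w))\<^sup>2) =
        (\<Sum>xs\<in>Lst D t. \<Sum>k<D. (psi xs k (vec (It t) w))\<^sup>2 * gr (mk (xs @ [k]) w))"
      using goodD
    proof eventually_elim
      case (elim w)
      have "(\<Sum>xs\<in>Lst D (Suc t). \<Sum>k<D. (psi xs k (vec (It (Suc t)) w))\<^sup>2) = Qv (Suc t) (mkv w)"
        unfolding Qv_Lst[OF elim] by (intro sum.cong refl) (simp add: psi_vec Lst_def)
      also have "\<dots> = (\<Sum>xs\<in>Lst D t. \<Sum>k<D. (psi xs k (vec (It t) w))\<^sup>2 * gr (mk (xs @ [k]) w))"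
        unfolding Qv_Suc_Lst[OF elim] by (intro sum.cong refl) (simp add: psi_vec Lst_def)
      finally show ?case .
    qed
  qed
  also have "\<dots> = (\<Sum>xs\<in>Lst D t. \<Sum>k<D. \<integral>w. (psi xs k (vec (It t) w))^2 * gr (mk (xs @ [k]) w) \<partial>M)"
  proof -
    have i: "integrable M (\<lambda>w. (psi xs k (vec (It t) w))^2 * gr (mk (xs @ [k]) w))" if "xs \<in> Lst D t" for xs k
    proof (rule IND(1)[where H="\<lambda>v. (psi xs k v)^2"])
      show "xs @ [k] \<notin> It t" using that by (auto simp: Lst_def)
      show "(\<lambda>v. (psi xs k v)^2) \<in> borel_measurable (PM (It t))"
        using psi_meas[of xs "It t" k] that by (auto simp: Lst_def)
      show "AE w in M. \<bar>(psi xs k (vec (It t) w))^2\<bar> \<le> (real n / real m)^2"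
        using psi_sq_bound by auto
    qed
    show ?thesis
      by (subst Bochner_Integration.integral_sum, use i in force,
          intro sum.cong refl Bochner_Integration.integral_sum, use i in auto)
  qed
  also have "\<dots> = (\<Sum>xs\<in>Lst D t. \<Sum>k<D. (\<integral>w. (psi xs k (vec (It t) w))^2 \<partial>M) * \<rho>)"
  proof (intro sum.cong refl)
    fix xs k assume xs: "xs \<in> Lst D t"
    show "(\<integral>w. (psi xs k (vec (It t) w))^2 * gr (mk (xs @ [k]) w) \<partial>M) = (\<integral>w. (psi xs k (vec (It t) w))^2 \<partial>M) * \<rho>"
    proof (subst IND(2)[where H="\<lambda>v. (psi xs k v)^2"])
      show "xs @ [k] \<notin> It t" using xs by (auto simp: Lst_def)
      show "(\<lambda>v. (psi xs k v)^2) \<in> borel_measurable (PM (It t))"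
        using psi_meas[of xs "It t" k] xs by (auto simp: Lst_def)
      show "AE w in M. \<bar>(psi xs k (vec (It t) w))^2\<bar> \<le> (real n / real m)^2"
        using psi_sq_bound by auto
    qed (simp add: E_gr)
  qed
  also have "\<dots> = \<rho> * q t" unfolding q_sum by (simp add: sum_distrib_left sum_distrib_right mult.commute)
  finally show ?thesis .
qed

lemma psi_vec0: "psi [] k (vec {[]} w) = psi [] k (mkv w)"
  by (rule psi_local) (auto simp: vec_def)

lemma q_0: "q 0 = real n / real m"
proof -
  have "q 0 = (\<integral>w. (real n / real m)^2 * real (din (mk [] w)) \<partial>M)"
    unfolding q_def
  proof (rule integral_cong_AE)
    show "(\<lambda>w. \<Sum>xs\<in>Lst D 0. \<Sum>k<D. (psi xs k (vec (It 0) w))\<^sup>2) \<in> borel_measurable M"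
      by (intro borel_measurable_sum borel_measurable_power psi_vec_meas) (auto simp: Lst_def)
    show "AE w in M. (\<Sum>xs\<in>Lst D 0. \<Sum>k<D. (psi xs k (vec (It 0) w))\<^sup>2) =
       (real n / real m)\<^sup>2 * real (din (mk [] w))"
      using goodD
    proof eventually_elim
      case (elim w)
      have "(\<Sum>xs\<in>Lst D 0. \<Sum>k<D. (psi xs k (vec (It 0) w))\<^sup>2) = Qv 0 (mkv w)"
        unfolding Qv_Lst[OF elim] by (intro sum.cong refl) (simp add: psi_vec0 Lst_def)
      also have "\<dots> = (real n / real m)\<^sup>2 * real (din (mk [] w))"
        unfolding Qv_def gen_0 by (simp add: cw_def)
      finally show ?case .
    qed
  qed simp
  also have "\<dots> = (real n / real m)^2 * (real m / real n)" using E_din_root by simp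
  also have "\<dots> = real n / real m" using n_pos m_pos by (simp add: power2_eq_square)
  finally show ?thesis .
qed

lemma q_t: "q t = real n / real m * \<rho> ^ t"
  by (induction t) (simp_all add: q_0 q_Suc)

definition aa :: "nat \<Rightarrow> nat list \<times> nat \<Rightarrow> 'a \<Rightarrow> real" where
  "aa t p w = psi (fst p) (snd p) (vec (It t) w) * (fr (mk (fst p @ [snd p]) w) - 1)"

lemma Dl_AE2: "AE w in M. Dl t w = (\<Sum>p\<in>Lst D t \<times> {..<D}. aa t p w)"
  using Dl_AE[of t] by eventually_elim (simp add: aa_def sum.cartesian_product split_def)

lemma psi_vecJ: "It t \<subseteq> J \<Longrightarrow> length xs \<le> t \<Longrightarrow> psi xs k (vec J w) = psi xs k (vec (It t) w)"
proof -
  assume a: "It t \<subseteq> J" "length xs \<le> t"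
  have "\<forall>ys. length ys \<le> length xs \<longrightarrow> ys \<in> J" using a by auto
  then have "psi xs k (vec J w) = psi xs k (mkv w)" by (intro psi_local) (auto simp: vec_def)
  moreover have "psi xs k (vec (It t) w) = psi xs k (mkv w)" using a by (intro psi_local) (auto simp: vec_def)
  ultimately show ?thesis by simp
qed

lemma aa_cross:
  assumes p: "p \<in> Lst D t \<times> {..<D}" and r: "r \<in> Lst D t \<times> {..<D}" and pq: "p \<noteq> r"
  shows "integrable M (\<lambda>w. aa t p w * aa t r w) \<and> (\<integral>w. aa t p w * aa t r w \<partial>M) = 0"
proof -
  obtain xs k where pe: "p = (xs, k)" by (cases p)
  obtain xs' k' where re: "r = (xs', k')" by (cases r)
  have lx: "length xs = t" "length xs' = t" using p r pe re by (auto simp: Lst_def)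
  let ?J = "insert (xs @ [k]) (It t)"
  define H where "H v = psi xs k v * psi xs' k' v * (fr (v (xs @ [k])) - 1)" for v
  have Hm: "H \<in> borel_measurable (PM ?J)" unfolding H_def
    by (intro borel_measurable_times psi_meas coord_meas[where F="\<lambda>i. fr i - 1"]) (use lx in auto)
  have HJ: "H (vec ?J w) = psi xs k (vec (It t) w) * psi xs' k' (vec (It t) w) * (fr (mk (xs @ [k]) w) - 1)" for w
    unfolding H_def using lx by (subst (1 2) psi_vecJ) (auto simp: vec_def)
  have HB: "AE w in M. \<bar>H (vec ?J w)\<bar> \<le> (real n / real m) * (real n / real m) * ((\<Sum>i\<in>{1..n}. \<bar>fr i\<bar>) + 1)"
    using fr_bound[of "xs @ [k]"]
  proof eventually_elim
    case (elim w)
    show ?case unfolding HJ abs_mult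
      by (intro mult_mono psi_bound elim) auto
  qed
  have y: "xs' @ [k'] \<notin> ?J" using pq lx pe re by auto
  have e: "aa t p w * aa t r w = H (vec ?J w) * (fr (mk (xs' @ [k']) w) - 1)" for w
    unfolding HJ aa_def pe re by simp
  show ?thesis unfolding e
    using IND[where g="\<lambda>i. fr i - 1", OF y Hm HB] E_fr1[OF Cons_nonempty] by simp
qed

lemma aa_diag:
  assumes p: "p \<in> Lst D t \<times> {..<D}"
  shows "integrable M (\<lambda>w. aa t p w * aa t p w) \<and>
    (\<integral>w. aa t p w * aa t p w \<partial>M) = (\<gamma> - 1) * (\<integral>w. (psi (fst p) (snd p) (vec (It t) w))^2 \<partial>M)"
proof -
  obtain xs k where pe: "p = (xs, k)" by (cases p)
  have lx: "length xs = t" using p pe by (auto simp: Lst_def)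
  have Hm: "(\<lambda>v. (psi xs k v)^2) \<in> borel_measurable (PM (It t))"
    using lx by (intro borel_measurable_power psi_meas) auto
  have HB: "AE w in M. \<bar>(psi xs k (vec (It t) w))^2\<bar> \<le> (real n / real m)^2"
    using psi_sq_bound by auto
  have y: "xs @ [k] \<notin> It t" using lx by auto
  have e: "aa t p w * aa t p w = (psi xs k (vec (It t) w))^2 * (fr (mk (xs @ [k]) w) - 1)^2" for w
    unfolding aa_def pe by (simp add: power2_eq_square)
  show ?thesis unfolding e
    using IND[where g="\<lambda>i. (fr i - 1)^2", OF y Hm HB] E_fr2[OF Cons_nonempty] pe by simp
qed

lemma E_Dl2: "(\<integral>w. (Dl t w)^2 \<partial>M) = (\<gamma> - 1) * q t"
proof -
  let ?P = "Lst D t \<times> {..<D}"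
  have finP: "finite ?P" using finite_Lst by auto
  have aam: "(\<lambda>w. aa t p w) \<in> borel_measurable M" if "p \<in> ?P" for p
    unfolding aa_def using that
    by (intro borel_measurable_times psi_vec_meas fun_mk_meas borel_measurable_diff) (auto simp: Lst_def)
  have "(\<integral>w. (Dl t w)^2 \<partial>M) = (\<integral>w. (\<Sum>p\<in>?P. \<Sum>p'\<in>?P. aa t p w * aa t p' w) \<partial>M)"
  proof (rule integral_cong_AE)
    show "(\<lambda>w. (Dl t w)^2) \<in> borel_measurable M" using Dl_meas by measurable
    show "(\<lambda>w. \<Sum>p\<in>?P. \<Sum>p'\<in>?P. aa t p w * aa t p' w) \<in> borel_measurable M"
      using aam by (intro borel_measurable_sum borel_measurable_times) auto
    show "AE w in M. (Dl t w)^2 = (\<Sum>p\<in>?P. \<Sum>p'\<in>?P. aa t p w * aa t p' w)"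
      using Dl_AE2[of t] by eventually_elim (simp add: power2_eq_square sum_product)
  qed
  also have "\<dots> = (\<Sum>p\<in>?P. \<Sum>p'\<in>?P. \<integral>w. aa t p w * aa t p' w \<partial>M)"
  proof -
    have i: "integrable M (\<lambda>w. aa t p w * aa t p' w)" if "p \<in> ?P" "p' \<in> ?P" for p p'
      using aa_cross[OF that] aa_diag[OF that(1)] by (cases "p = p'") auto
    show ?thesis
      by (subst Bochner_Integration.integral_sum, use i in force,
          intro sum.cong refl Bochner_Integration.integral_sum, use i in auto)
  qed
  also have "\<dots> = (\<Sum>p\<in>?P. (\<gamma> - 1) * (\<integral>w. (psi (fst p) (snd p) (vec (It t) w))^2 \<partial>M))"
  proof (rule sum.cong[OF refl])
    fix p assume p: "p \<in> ?P"
    have "(\<Sum>p'\<in>?P. \<integral>w. aa t p w * aa t p' w \<partial>M) = (\<Sum>p'\<in>?P. if p' = p then \<integral>w. aa t p w * aa t p w \<partial>M else 0)"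
      using aa_cross[OF p] by (intro sum.cong) auto
    also have "\<dots> = (\<integral>w. aa t p w * aa t p w \<partial>M)" using p finP by (simp add: sum.delta)
    finally show "(\<Sum>p'\<in>?P. \<integral>w. aa t p w * aa t p' w \<partial>M) = (\<gamma> - 1) * (\<integral>w. (psi (fst p) (snd p) (vec (It t) w))^2 \<partial>M)"
      using aa_diag[OF p] by simp
  qed
  also have "\<dots> = (\<gamma> - 1) * q t"
    unfolding q_sum by (simp add: sum_distrib_left sum.cartesian_product split_def)
  finally show ?thesis .
qed

lemma E_Dl2': "(\<integral>w. (Dl t w)^2 \<partial>M) = (\<gamma> - 1) * (real n / real m) * \<rho> ^ t"
  unfolding E_Dl2 q_t by simp

lemma int_bdd: "f \<in> borel_measurable M \<Longrightarrow> AE w in M. \<bar>f w\<bar> \<le> (A::real) \<Longrightarrow> integrable M f"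
  by (rule integrable_const_bound[where B=A]) auto

lemma int_bdd2:
  assumes "f \<in> borel_measurable M" "AE w in M. \<bar>f w\<bar> \<le> (A::real)"
    "g \<in> borel_measurable M" "AE w in M. \<bar>g w\<bar> \<le> (B::real)"
  shows "integrable M (\<lambda>w. f w * g w)"
proof (rule integrable_const_bound[where B="A * B"])
  show "AE w in M. norm (f w * g w) \<le> A * B"
    using assms(2,4)
  proof eventually_elim
    case (elim w)
    then show ?case unfolding real_norm_def abs_mult by (intro mult_mono) auto
  qed
qed (use assms in measurable)

definition BM :: "nat \<Rightarrow> real" where "BM t = real (card (Lst D t)) * real D * (real n / real m)"

lemma MPv_bound:
  assumes "\<forall>ys. din (v ys) \<le> D"
  shows "\<bar>MPv t v\<bar> \<le> BM t"
proof -
  have "\<bar>MPv t v\<bar> \<le> (\<Sum>xs\<in>Lst D t. \<Sum>k<D. \<bar>psi xs k v\<bar>)"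
    unfolding MPv_Lst[OF assms] by (rule order.trans[OF sum_abs sum_mono[OF sum_abs]])
  also have "\<dots> \<le> (\<Sum>xs\<in>Lst D t. \<Sum>k<D. real n / real m)"
    by (intro sum_mono psi_bound)
  finally show ?thesis unfolding BM_def by simp
qed

lemma Mt_bound: "AE w in M. \<bar>Mt t w\<bar> \<le> BM t"
  using goodD by eventually_elim (rule MPv_bound)

lemma Mt_vec: "t \<le> T \<Longrightarrow> MPv t (vec (It T) w) = Mt t w"
  by (rule MPv_local) (auto simp: vec_def)

lemma E_incr: "t \<le> T \<Longrightarrow> (\<integral>w. (Mt T w - Mt t w)^2 \<partial>M) = (\<Sum>s\<in>{t..<T}. \<integral>w. (Dl s w)^2 \<partial>M)"
proof (induction T rule: dec_induct)
  case base then show ?case by simp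
next
  case (step T)
  have tT: "t \<le> T" using step by simp
  let ?X = "\<lambda>w. Mt T w - Mt t w"
  have Xm: "?X \<in> borel_measurable M" using Mt_meas[of T] Mt_meas[of t] by measurable
  have XB: "AE w in M. \<bar>?X w\<bar> \<le> BM T + BM t"
    using Mt_bound[of T] Mt_bound[of t] by eventually_elim auto
  have DB: "AE w in M. \<bar>Dl T w\<bar> \<le> BM (Suc T) + BM T"
    using Mt_bound[of T] Mt_bound[of "Suc T"] by eventually_elim auto
  have cross: "(\<integral>w. ?X w * Dl T w \<partial>M) = 0"
  proof -
    have H: "(\<lambda>v. MPv T v - MPv t v) \<in> borel_measurable (PM (It T))"
    proof -
      have "MPv t \<in> borel_measurable (PM (It T))" using tT by (intro MPv_meas) auto
      moreover have "MPv T \<in> borel_measurable (PM (It T))" by (intro MPv_meas) auto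
      ultimately show ?thesis by measurable
    qed
    have "AE w in M. \<bar>MPv T (vec (It T) w) - MPv t (vec (It T) w)\<bar> \<le> BM T + BM t"
      using XB by (simp add: Mt_vec tT)
    from KEY[OF H this] show ?thesis by (simp add: Mt_vec tT)
  qed
  have "(\<integral>w. (Mt (Suc T) w - Mt t w)^2 \<partial>M) =
        (\<integral>w. (?X w)^2 + 2 * (?X w * Dl T w) + (Dl T w)^2 \<partial>M)"
    by (rule Bochner_Integration.integral_cong) (auto simp: power2_eq_square algebra_simps)
  also have "\<dots> = (\<integral>w. (?X w)^2 \<partial>M) + 2 * (\<integral>w. ?X w * Dl T w \<partial>M) + (\<integral>w. (Dl T w)^2 \<partial>M)"
  proof -
    have i1: "integrable M (\<lambda>w. (?X w)^2)"
      unfolding power2_eq_square by (rule int_bdd2[OF Xm XB Xm XB])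
    have i2: "integrable M (\<lambda>w. ?X w * Dl T w)"
      by (rule int_bdd2[OF Xm XB Dl_meas DB])
    have i3: "integrable M (\<lambda>w. (Dl T w)^2)"
      unfolding power2_eq_square by (rule int_bdd2[OF Dl_meas DB Dl_meas DB])
    show ?thesis using i1 i2 i3 by simp
  qed
  also have "\<dots> = (\<Sum>s\<in>{t..<Suc T}. \<integral>w. (Dl s w)^2 \<partial>M)"
    using step.IH cross tT by simp
  finally show ?case .
qed

lemma E_incr': "t \<le> T \<Longrightarrow> (\<integral>w. (Mt T w - Mt t w)^2 \<partial>M) = (\<Sum>s\<in>{t..<T}. (\<gamma> - 1) * (real n / real m) * \<rho> ^ s)"
  unfolding E_incr E_Dl2' by simp

end



context bp begin

lemma degpos: "i \<in> {1..n} \<Longrightarrow> din i > 0 \<and> dout i > 0" using degs by force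

lemma rho_pos: "\<rho> > 0"
proof -
  have "(\<Sum>i\<in>{1..n}. real (din i) / real (dout i)) > 0"
    using n_pos degpos by (intro sum_pos divide_pos_pos) auto
  then show ?thesis unfolding \<rho>_def using m_pos by simp
qed

lemma rho_lt1: "\<rho> < 1"
proof -
  have "(\<Sum>i\<in>{1..n}. real (din i) / real (dout i)) \<le> (\<Sum>i\<in>{1..n}. real (din i) / 2)"
    using degs degpos by (intro sum_mono divide_left_mono) auto
  also have "\<dots> = real m / 2" unfolding m_def by (simp add: sum_divide_distrib[symmetric])
  finally show ?thesis unfolding \<rho>_def using m_pos by (simp add: field_simps)
qed

definition cc :: real where "cc = (\<gamma> - 1) * (real n / real m)"

lemma E_Dl2c: "(\<integral>w. (Dl t w)^2 \<partial>M) = cc * \<rho> ^ t"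
  unfolding E_Dl2' cc_def by simp

lemma cc_nonneg: "cc \<ge> 0"
proof -
  have "0 \<le> (\<integral>w. (Dl 0 w)^2 \<partial>M)" by (rule integral_nonneg_AE) auto
  then show ?thesis using E_Dl2c[of 0] by simp
qed

lemma Dl_B: "AE w in M. \<bar>Dl t w\<bar> \<le> BM (Suc t) + BM t"
  using Mt_bound[of t] Mt_bound[of "Suc t"] by eventually_elim auto

lemma Dl_int: "integrable M (\<lambda>w. Dl t w)"
  by (rule int_bdd[OF Dl_meas Dl_B])

lemma Dl_abs_int: "integrable M (\<lambda>w. \<bar>Dl t w\<bar>)"
  by (rule integrable_abs[OF Dl_int])

lemma Dl_sq_int: "integrable M (\<lambda>w. (Dl t w)^2)"
  unfolding power2_eq_square by (rule int_bdd2[OF Dl_meas Dl_B Dl_meas Dl_B])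

lemma E_abs: "(\<integral>w. \<bar>Dl t w\<bar> \<partial>M) \<le> (cc + 1) / 2 * sqrt \<rho> ^ t"
proof -
  define a where "a = sqrt \<rho> ^ t"
  have a: "a > 0" unfolding a_def using rho_pos by simp
  have pt: "\<bar>x\<bar> \<le> (x^2 / a + a) / 2" for x :: real
  proof -
    have "0 \<le> (\<bar>x\<bar> - a)^2" by simp
    then have "2 * a * \<bar>x\<bar> \<le> x^2 + a^2" by (simp add: power2_eq_square algebra_simps)
    then show ?thesis using a by (simp add: field_simps power2_eq_square)
  qed
  have "(\<integral>w. \<bar>Dl t w\<bar> \<partial>M) \<le> (\<integral>w. ((Dl t w)^2 / a + a) / 2 \<partial>M)"
    by (rule integral_mono[OF Dl_abs_int]) (use Dl_sq_int pt in auto)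
  also have "\<dots> = ((cc * \<rho> ^ t) / a + a) / 2"
    using Dl_sq_int[of t] by (simp add: E_Dl2c prob_space)
  also have "(cc * \<rho> ^ t) / a = cc * a"
  proof -
    have "\<rho> ^ t = a * a" unfolding a_def using rho_pos
      by (simp add: power_mult_distrib[symmetric])
    then show ?thesis using a by simp
  qed
  finally show ?thesis unfolding a_def by (simp add: field_simps)
qed

lemma AE_summable: "AE w in M. summable (\<lambda>t. \<bar>Dl t w\<bar>)"
proof -
  define r where "r = sqrt \<rho>"
  have r: "0 < r" "r < 1" unfolding r_def using rho_pos rho_lt1 by auto
  have sg: "summable (\<lambda>t. (cc + 1) / 2 * r ^ t)"
    using r by (intro summable_mult summable_geometric) auto
  have m: "(\<lambda>w. ennreal \<bar>Dl t w\<bar>) \<in> borel_measurable M" for t using Dl_meas by measurable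
  have "(\<integral>\<^sup>+ w. (\<Sum>t. ennreal \<bar>Dl t w\<bar>) \<partial>M) = (\<Sum>t. \<integral>\<^sup>+ w. ennreal \<bar>Dl t w\<bar> \<partial>M)"
    by (rule nn_integral_suminf[OF m])
  also have "\<dots> = (\<Sum>t. ennreal (\<integral>w. \<bar>Dl t w\<bar> \<partial>M))"
    by (intro suminf_cong nn_integral_eq_integral Dl_abs_int) auto
  also have "\<dots> \<le> (\<Sum>t. ennreal ((cc + 1) / 2 * r ^ t))"
    by (intro suminf_le ennreal_leI) (use E_abs r_def in auto)
  also have "\<dots> = ennreal (\<Sum>t. (cc + 1) / 2 * r ^ t)"
    using cc_nonneg r by (intro suminf_ennreal2 sg) auto
  finally have fin: "(\<integral>\<^sup>+ w. (\<Sum>t. ennreal \<bar>Dl t w\<bar>) \<partial>M) \<noteq> \<infinity>"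
    by (auto simp: top_unique)
  have "AE w in M. (\<Sum>t. ennreal \<bar>Dl t w\<bar>) \<noteq> \<infinity>"
    by (rule nn_integral_noteq_infinite[OF _ fin]) (use m in measurable)
  then show ?thesis
    by eventually_elim (rule summable_suminf_not_top, auto)
qed

definition Mstar :: "'a \<Rightarrow> real" where "Mstar w = lim (\<lambda>t. Mt t w)"

lemma Mstar_meas: "Mstar \<in> borel_measurable M"
  unfolding Mstar_def by (rule borel_measurable_lim_metric[OF Mt_meas])

lemma AE_conv: "AE w in M. (\<lambda>t. Mt t w) \<longlonglongrightarrow> Mstar w"
  using AE_summable
proof eventually_elim
  case (elim w)
  then have "summable (\<lambda>t. Dl t w)" by (rule summable_rabs_cancel)
  then have "(\<lambda>t. \<Sum>s<t. Dl s w) \<longlonglongrightarrow> (\<Sum>s. Dl s w)" by (rule summable_LIMSEQ)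
  then have "(\<lambda>t. Mt 0 w + (\<Sum>s<t. Dl s w)) \<longlonglongrightarrow> Mt 0 w + (\<Sum>s. Dl s w)"
    by (intro tendsto_add tendsto_const)
  moreover have "Mt 0 w + (\<Sum>s<t. Dl s w) = Mt t w" for t
    by (subst sum_lessThan_telescope[where f="\<lambda>s. Mt s w"]) simp
  ultimately have "convergent (\<lambda>t. Mt t w)" unfolding convergent_def by auto
  then show ?case unfolding Mstar_def by (simp add: convergent_LIMSEQ_iff)
qed

definition R :: "nat \<Rightarrow> real" where "R t = cc * \<rho> ^ t / (1 - \<rho>)"

lemma geom0: "(\<Sum>s\<in>{t..<t+k}. \<rho> ^ s) = (\<rho> ^ t - \<rho> ^ (t+k)) / (1 - \<rho>)"
proof (induction k)
  case 0 then show ?case by simp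
next
  case (Suc k)
  have "(\<Sum>s\<in>{t..<t + Suc k}. \<rho> ^ s) = (\<Sum>s\<in>{t..<t+k}. \<rho> ^ s) + \<rho> ^ (t+k)" by simp
  also have "\<dots> = (\<rho> ^ t - \<rho> ^ (t+k)) / (1 - \<rho>) + \<rho> ^ (t+k)" using Suc by simp
  also have "\<dots> = (\<rho> ^ t - \<rho> ^ (t + Suc k)) / (1 - \<rho>)" using rho_lt1 by (simp add: field_simps)
  finally show ?case .
qed

lemma geom: "t \<le> T \<Longrightarrow> (\<Sum>s\<in>{t..<T}. \<rho> ^ s) = (\<rho> ^ t - \<rho> ^ T) / (1 - \<rho>)"
  using geom0[of t "T - t"] by simp

lemma Sgeom: "t \<le> T \<Longrightarrow> (\<integral>w. (Mt T w - Mt t w)^2 \<partial>M) = R t - R T"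
proof -
  assume tT: "t \<le> T"
  have "(\<integral>w. (Mt T w - Mt t w)^2 \<partial>M) = (\<Sum>s\<in>{t..<T}. cc * \<rho> ^ s)"
    using E_incr'[OF tT] unfolding cc_def by simp
  also have "\<dots> = cc * (\<Sum>s\<in>{t..<T}. \<rho> ^ s)" by (simp add: sum_distrib_left)
  also have "\<dots> = cc * ((\<rho> ^ t - \<rho> ^ T) / (1 - \<rho>))" by (simp add: geom[OF tT])
  also have "\<dots> = R t - R T" unfolding R_def by (simp add: diff_divide_distrib right_diff_distrib)
  finally show ?thesis .
qed

lemma R_nonneg: "R t \<ge> 0"
  unfolding R_def using cc_nonneg rho_pos rho_lt1 by simp

lemma R_lim: "R \<longlonglongrightarrow> 0"
proof -
  have "(\<lambda>t. cc / (1 - \<rho>) * \<rho> ^ t) \<longlonglongrightarrow> cc / (1 - \<rho>) * 0"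
    using rho_pos rho_lt1 by (intro tendsto_mult tendsto_const LIMSEQ_power_zero) auto
  then show ?thesis unfolding R_def by (simp add: field_simps)
qed

lemma Mt_sq_int: "integrable M (\<lambda>w. (Mt T w - Mt t w)^2)"
proof -
  have m: "(\<lambda>w. Mt T w - Mt t w) \<in> borel_measurable M" using Mt_meas[of T] Mt_meas[of t] by measurable
  have b: "AE w in M. \<bar>Mt T w - Mt t w\<bar> \<le> BM T + BM t"
    using Mt_bound[of T] Mt_bound[of t] by eventually_elim auto
  show ?thesis unfolding power2_eq_square by (rule int_bdd2[OF m b m b])
qed

lemma tail_le: "(\<integral>\<^sup>+ w. ennreal ((Mstar w - Mt t w)^2) \<partial>M) \<le> ennreal (R t)"
proof -
  have "(\<integral>\<^sup>+ w. ennreal ((Mstar w - Mt t w)^2) \<partial>M) =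
        (\<integral>\<^sup>+ w. liminf (\<lambda>T. ennreal ((Mt T w - Mt t w)^2)) \<partial>M)"
  proof (rule nn_integral_cong_AE)
    show "AE w in M. ennreal ((Mstar w - Mt t w)^2) = liminf (\<lambda>T. ennreal ((Mt T w - Mt t w)^2))"
      using AE_conv
    proof eventually_elim
      case (elim w)
      have "(\<lambda>T. ennreal ((Mt T w - Mt t w)^2)) \<longlonglongrightarrow> ennreal ((Mstar w - Mt t w)^2)"
        by (intro tendsto_ennrealI tendsto_power tendsto_diff elim tendsto_const)
      from lim_imp_Liminf[OF trivial_limit_sequentially this] show ?case by simp
    qed
  qed
  also have "\<dots> \<le> liminf (\<lambda>T. \<integral>\<^sup>+ w. ennreal ((Mt T w - Mt t w)^2) \<partial>M)"
    by (rule nn_integral_liminf) (use Mt_meas in measurable)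
  also have "\<dots> \<le> ennreal (R t)"
  proof (rule Liminf_le)
    show "\<forall>\<^sub>F T in sequentially. (\<integral>\<^sup>+ w. ennreal ((Mt T w - Mt t w)^2) \<partial>M) \<le> ennreal (R t)"
    proof (rule eventually_sequentiallyI[of t])
      fix T assume tT: "t \<le> T"
      have "(\<integral>\<^sup>+ w. ennreal ((Mt T w - Mt t w)^2) \<partial>M) = ennreal (\<integral>w. (Mt T w - Mt t w)^2 \<partial>M)"
        by (rule nn_integral_eq_integral[OF Mt_sq_int]) auto
      also have "\<dots> \<le> ennreal (R t)" unfolding Sgeom[OF tT] using R_nonneg[of T] by (intro ennreal_leI) simp
      finally show "(\<integral>\<^sup>+ w. ennreal ((Mt T w - Mt t w)^2) \<partial>M) \<le> ennreal (R t)" .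
    qed
  qed simp
  finally show ?thesis .
qed

lemma tail_int: "integrable M (\<lambda>w. (Mstar w - Mt t w)^2)"
  by (rule integrableI_nonneg) (use Mstar_meas Mt_meas tail_le[of t] in \<open>auto simp: top_unique less_top[symmetric] intro: le_less_trans\<close>)

lemma tail_upper: "(\<integral>w. (Mstar w - Mt t w)^2 \<partial>M) \<le> R t"
proof -
  have "(\<integral>w. (Mstar w - Mt t w)^2 \<partial>M) = enn2real (\<integral>\<^sup>+ w. ennreal ((Mstar w - Mt t w)^2) \<partial>M)"
    by (rule integral_eq_nn_integral) (use Mstar_meas Mt_meas in auto)
  also have "\<dots> \<le> enn2real (ennreal (R t))"
    by (rule enn2real_mono[OF tail_le]) simp
  finally show ?thesis using R_nonneg by simp
qed

lemma tail_lower_eps: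
  assumes e: "0 < e" "e < 1" and tT: "t \<le> T"
  shows "(1 - e) * (R t - R T) + (1 - 1 / e) * R T \<le> (\<integral>w. (Mstar w - Mt t w)^2 \<partial>M)"
proof -
  have pt: "(1 - e) * a^2 + (1 - 1/e) * b^2 \<le> (a + b)^2" for a b :: real
  proof -
    have "0 \<le> (e * a + b)^2 / e" using e by simp
    also have "(e * a + b)^2 / e = (a + b)^2 - ((1 - e) * a^2 + (1 - 1/e) * b^2)"
      using e by (simp add: field_simps power2_eq_square)
    finally show ?thesis by simp
  qed
  have "(1 - e) * (R t - R T) + (1 - 1 / e) * R T \<le>
        (1 - e) * (\<integral>w. (Mt T w - Mt t w)^2 \<partial>M) + (1 - 1/e) * (\<integral>w. (Mstar w - Mt T w)^2 \<partial>M)"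
  proof -
    have "(1 - 1 / e) * R T \<le> (1 - 1/e) * (\<integral>w. (Mstar w - Mt T w)^2 \<partial>M)"
      using e tail_upper[of T] by (intro mult_left_mono_neg) (auto simp: field_simps)
    then show ?thesis unfolding Sgeom[OF tT] by simp
  qed
  also have "\<dots> = (\<integral>w. (1 - e) * (Mt T w - Mt t w)^2 + (1 - 1/e) * (Mstar w - Mt T w)^2 \<partial>M)"
    using Mt_sq_int[of T t] tail_int[of T] by simp
  also have "\<dots> \<le> (\<integral>w. (Mstar w - Mt t w)^2 \<partial>M)"
  proof (rule integral_mono)
    show "integrable M (\<lambda>w. (1 - e) * (Mt T w - Mt t w)^2 + (1 - 1/e) * (Mstar w - Mt T w)^2)"
      using Mt_sq_int[of T t] tail_int[of T] by simp
    show "integrable M (\<lambda>w. (Mstar w - Mt t w)^2)" by (rule tail_int)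
    fix w show "(1 - e) * (Mt T w - Mt t w)^2 + (1 - 1/e) * (Mstar w - Mt T w)^2 \<le> (Mstar w - Mt t w)^2"
      using pt[of "Mt T w - Mt t w" "Mstar w - Mt T w"] by simp
  qed
  finally show ?thesis .
qed

lemma tail_eq: "(\<integral>w. (Mstar w - Mt t w)^2 \<partial>M) = R t"
proof (rule antisym[OF tail_upper])
  let ?I = "(\<integral>w. (Mstar w - Mt t w)^2 \<partial>M)"
  have le: "(1 - e) * R t \<le> ?I" if e: "0 < e" "e < 1" for e
  proof (rule LIMSEQ_le_const2)
    show "(\<lambda>T. (1 - e) * (R t - R T) + (1 - 1 / e) * R T) \<longlonglongrightarrow> (1 - e) * R t"
      using tendsto_add[OF tendsto_mult[OF tendsto_const tendsto_diff[OF tendsto_const R_lim]]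
          tendsto_mult[OF tendsto_const R_lim], of "1 - e" "R t" "1 - 1/e"] by simp
    show "\<exists>N. \<forall>T\<ge>N. (1 - e) * (R t - R T) + (1 - 1 / e) * R T \<le> ?I"
      using tail_lower_eps[OF e] by blast
  qed
  show "R t \<le> ?I"
  proof (rule LIMSEQ_le_const2)
    show "(\<lambda>k. (1 - 1 / real (k + 2)) * R t) \<longlonglongrightarrow> R t"
    proof -
      have "(\<lambda>k. 1 / real (k + 2)) \<longlonglongrightarrow> 0"
        using LIMSEQ_ignore_initial_segment[OF lim_1_over_n, of 2] by (simp add: add.commute)
      from tendsto_mult[OF tendsto_diff[OF tendsto_const this] tendsto_const, of 1 "R t"]
      show ?thesis by simp
    qed
    show "\<exists>N. \<forall>k\<ge>N. (1 - 1 / real (k + 2)) * R t \<le> ?I"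
      by (intro exI[of _ 0] allI impI le) auto
  qed
qed

end



context bp begin

lemma Mproc_eq: "Mproc n m din dout mk t w = Mt t w"
proof -
  have g: "generation din mk t w = gen (mkv w) t"
    unfolding generation_def gen_def in_tree_def intree_def by simp
  show ?thesis unfolding Mproc_def MPv_def g
    by (intro sum.cong refl) (simp add: weight_def cw_def)
qed

lemma Mproc_eq': "Mproc n m din dout mk = (\<lambda>t w. Mt t w)"
  using Mproc_eq by (intro ext) simp

definition Gob :: "nat \<Rightarrow> nat list \<Rightarrow> (nat list \<Rightarrow> nat) \<Rightarrow> nat option" where
  "Gob t xs v = (if length xs \<le> t \<and> intree v xs then Some (v xs) else None)"

lemma obs_Gob: "obs din mk t xs w = Gob t xs (vec (It t) w)"
proof (cases "length xs \<le> t")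
  case True
  have "intree (vec (It t) w) xs = intree (mkv w) xs"
    using True by (intro intree_local) (auto simp: vec_def)
  then show ?thesis using True
    unfolding obs_def Gob_def in_tree_def intree_def by (simp add: vec_def)
qed (simp add: obs_def Gob_def)

lemma Gob_meas: "Gob t xs \<in> measurable (PM (It t)) (count_space UNIV)"
proof (cases "length xs \<le> t")
  case True
  have s: "{v \<in> space (PM (It t)). intree v xs} \<in> sets (PM (It t))"
  proof -
    have "(\<lambda>v. if intree v xs then 1 else (0::real)) -` {1} \<inter> space (PM (It t)) \<in> sets (PM (It t))"
      using True by (intro measurable_sets[OF intree_meas]) auto
    moreover have "(\<lambda>v. if intree v xs then 1 else (0::real)) -` {1} \<inter> space (PM (It t)) =
        {v \<in> space (PM (It t)). intree v xs}" by (auto split: if_splits)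
    ultimately show ?thesis by simp
  qed
  have "(\<lambda>v. if intree v xs then Some (v xs) else None) \<in> measurable (PM (It t)) (count_space UNIV)"
  proof (rule measurable_If[OF _ _ s])
    show "(\<lambda>v. Some (v xs)) \<in> measurable (PM (It t)) (count_space UNIV)"
      by (rule measurable_compose[OF measurable_component_singleton[of xs]]) (use True in auto)
  qed simp
  then show ?thesis unfolding Gob_def using True by simp
next
  case False
  then have "Gob t xs = (\<lambda>v. None)" by (auto simp: Gob_def fun_eq_iff)
  then show ?thesis by simp
qed

lemma obs_meas: "obs din mk t xs \<in> measurable M (count_space UNIV)"
  unfolding obs_Gob by (rule measurable_compose[OF vec_meas Gob_meas])

abbreviation FF :: "nat \<Rightarrow> 'a measure" where "FF t \<equiv> nat_filtration M din mk t"

definition GG :: "nat \<Rightarrow> 'a set set" where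
  "GG t = {{w \<in> space M. obs din mk t xs w = v} | xs v. True}"

lemma GG_sub: "GG t \<subseteq> Pow (space M)" unfolding GG_def by auto

lemma space_FF: "space (FF t) = space M"
  unfolding nat_filtration_def using GG_sub[of t] unfolding GG_def by (simp add: space_measure_of)

lemma sets_FF: "sets (FF t) = sigma_sets (space M) (GG t)"
  unfolding nat_filtration_def using GG_sub[of t] unfolding GG_def by (simp add: sets_measure_of)

lemma GG_sets: "GG t \<subseteq> sets M"
proof
  fix A assume "A \<in> GG t"
  then obtain xs v where A: "A = {w \<in> space M. obs din mk t xs w = v}" unfolding GG_def by auto
  have "A = obs din mk t xs -` {v} \<inter> space M" unfolding A by auto
  then show "A \<in> sets M" using measurable_sets[OF obs_meas, of "{v}" t xs] by simp
qed

lemma subalg: "subalgebra M (FF t)"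
  unfolding subalgebra_def space_FF sets_FF
  by (simp add: sets.sigma_sets_subset GG_sets)

lemma obs_FF_meas: "obs din mk t xs \<in> measurable (FF t) (count_space UNIV)"
proof (subst measurable_count_space_eq2_countable, safe)
  fix a
  have "obs din mk t xs -` {a} \<inter> space (FF t) = {w \<in> space M. obs din mk t xs w = a}"
    unfolding space_FF by auto
  also have "\<dots> \<in> sets (FF t)" unfolding sets_FF GG_def by (intro sigma_sets.Basic) blast
  finally show "obs din mk t xs -` {a} \<inter> space (FF t) \<in> sets (FF t)" .
qed simp

lemma FF_mono: "s \<le> t \<Longrightarrow> sets (FF s) \<subseteq> sets (FF t)"
proof -
  assume st: "s \<le> t"
  have "GG s \<subseteq> sets (FF t)"
  proof
    fix A assume "A \<in> GG s"
    then obtain xs v where A: "A = {w \<in> space M. obs din mk s xs w = v}" unfolding GG_def by auto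
    show "A \<in> sets (FF t)"
    proof (cases "length xs \<le> s")
      case True
      then have "A = {w \<in> space M. obs din mk t xs w = v}" unfolding A obs_def using st by auto
      then show ?thesis unfolding sets_FF GG_def by (intro sigma_sets.Basic) blast
    next
      case False
      then have "A = (if v = None then space M else {})" unfolding A obs_def by auto
      then show ?thesis using sets.top[of "FF t"] unfolding space_FF by auto
    qed
  qed
  then show ?thesis unfolding sets_FF[of s]
    using sets.sigma_sets_subset[of "GG s" "FF t"] unfolding space_FF by simp
qed

lemma Mt_FF_meas: "(\<lambda>w. Mt t w) \<in> borel_measurable (FF t)"
proof -
  define ov where "ov w xs = (case obs din mk t xs w of Some i \<Rightarrow> i | None \<Rightarrow> 0)" for w xs
  have ov: "ov w = (\<lambda>ys. if length ys \<le> t \<and> intree (mkv w) ys then mk ys w else 0)" for w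
    unfolding ov_def obs_def in_tree_def intree_def by (rule ext) auto
  have "Mt t w = MPv t (ov w)" for w unfolding ov by (simp add: MPv_trunc)
  moreover have "ov \<in> measurable (FF t) (PM UNIV)"
  proof -
    have "(\<lambda>w xs. ov w xs) \<in> measurable (FF t) (PM UNIV)"
    proof (rule measurable_PiM_single')
      fix xs :: "nat list"
      show "(\<lambda>w. ov w xs) \<in> measurable (FF t) (count_space UNIV)"
        unfolding ov_def by (rule measurable_compose[OF obs_FF_meas]) simp
    qed auto
    then show ?thesis by simp
  qed
  ultimately show ?thesis using measurable_compose[OF _ MPv_meas[of t UNIV]] by auto
qed

lemma vec_space: "w \<in> space M \<Longrightarrow> vec J w \<in> space (PM J)"
  using measurable_space[OF vec_meas] .

lemma FF_vimage:
  assumes A: "A \<in> sets (FF s)"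
  shows "\<exists>B\<in>sets (PM (It s)). A = vec (It s) -` B \<inter> space M"
proof -
  let ?V = "vimage_algebra (space M) (vec (It s)) (PM (It s))"
  have sv: "sets ?V = {vec (It s) -` B \<inter> space M | B. B \<in> sets (PM (It s))}"
    by (rule sets_vimage_algebra2) (use vec_space in auto)
  have "GG s \<subseteq> sets ?V"
  proof
    fix A assume "A \<in> GG s"
    then obtain xs v where A: "A = {w \<in> space M. obs din mk s xs w = v}" unfolding GG_def by auto
    have "A = vec (It s) -` (Gob s xs -` {v} \<inter> space (PM (It s))) \<inter> space M"
      unfolding A obs_Gob using vec_space by auto
    moreover have "Gob s xs -` {v} \<inter> space (PM (It s)) \<in> sets (PM (It s))"
      by (rule measurable_sets[OF Gob_meas]) simp
    ultimately show "A \<in> sets ?V" unfolding sv by blast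
  qed
  then have "sigma_sets (space M) (GG s) \<subseteq> sets ?V"
    using sets.sigma_sets_subset[of "GG s" ?V] by simp
  then show ?thesis using A unfolding sets_FF sv by blast
qed

lemma Mt_int: "integrable M (\<lambda>w. Mt t w)"
  by (rule int_bdd[OF Mt_meas Mt_bound])

lemma set_int_eq:
  assumes A: "A \<in> sets (FF s)"
  shows "(\<integral>w. indicator A w * Mt (s + k) w \<partial>M) = (\<integral>w. indicator A w * Mt s w \<partial>M)"
proof -
  obtain B where B: "B \<in> sets (PM (It s))" and AB: "A = vec (It s) -` B \<inter> space M"
    using FF_vimage[OF A] by blast
  have Am: "A \<in> sets M" using A subalg[of s] unfolding subalgebra_def by auto
  have ind: "(\<lambda>w. indicator A w :: real) \<in> borel_measurable M" using Am by simp
  have indB: "AE w in M. \<bar>indicator A w :: real\<bar> \<le> 1" by (auto simp: indicator_def)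
  show ?thesis
  proof (induction k)
    case 0 then show ?case by simp
  next
    case (Suc k)
    let ?T = "s + k"
    define H where "H v = (indicator B (restrict v (It s)) :: real)" for v
    have Hm: "H \<in> borel_measurable (PM (It ?T))" unfolding H_def
      by (rule measurable_compose[OF measurable_restrict_subset borel_measurable_indicator[OF B]]) auto
    have HA: "H (vec (It ?T) w) = indicator A w" if "w \<in> space M" for w
    proof -
      have "restrict (vec (It ?T) w) (It s) = vec (It s) w" unfolding vec_def by (auto simp: restrict_def)
      then show ?thesis unfolding H_def AB using that by (simp add: indicator_def)
    qed
    have HB: "AE w in M. \<bar>H (vec (It ?T) w)\<bar> \<le> 1"
      by (auto simp: H_def indicator_def)
    have "(\<integral>w. indicator A w * Dl ?T w \<partial>M) = (\<integral>w. H (vec (It ?T) w) * Dl ?T w \<partial>M)"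
      by (rule Bochner_Integration.integral_cong) (auto simp: HA)
    also have "\<dots> = 0" by (rule KEY[OF Hm HB])
    finally have z: "(\<integral>w. indicator A w * Dl ?T w \<partial>M) = 0" .
    have i1: "integrable M (\<lambda>w. indicator A w * Mt ?T w)" by (rule int_bdd2[OF ind indB Mt_meas Mt_bound])
    have i2: "integrable M (\<lambda>w. indicator A w * Dl ?T w)" by (rule int_bdd2[OF ind indB Dl_meas Dl_B])
    have "(\<integral>w. indicator A w * Mt (s + Suc k) w \<partial>M) = (\<integral>w. indicator A w * Mt ?T w + indicator A w * Dl ?T w \<partial>M)"
      by (rule Bochner_Integration.integral_cong) (auto simp: algebra_simps)
    also have "\<dots> = (\<integral>w. indicator A w * Mt ?T w \<partial>M) + (\<integral>w. indicator A w * Dl ?T w \<partial>M)"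
      using i1 i2 by simp
    finally show ?case using z Suc by simp
  qed
qed

lemma cond_exp_eq:
  assumes st: "s \<le> t"
  shows "AE w in M. real_cond_exp M (FF s) (\<lambda>w. Mt t w) w = Mt s w"
proof -
  have "finite_measure_subalgebra M (FF s)"
    unfolding finite_measure_subalgebra_def finite_measure_subalgebra_axioms_def
    using subalg[of s] finite_measure_axioms by simp
  then have sf: "sigma_finite_subalgebra M (FF s)" by (rule finite_measure_subalgebra_is_sigma_finite)
  obtain k where t: "t = s + k" using st le_Suc_ex by blast
  show ?thesis
  proof (rule sigma_finite_subalgebra.real_cond_exp_charact[OF sf])
    fix A assume "A \<in> sets (FF s)"
    then show "(\<integral>w\<in>A. Mt t w \<partial>M) = (\<integral>w\<in>A. Mt s w \<partial>M)"
      unfolding set_lebesgue_integral_def t using set_int_eq by simp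
  qed (use Mt_int Mt_FF_meas in auto)
qed

lemma martingale_Mproc: "martingale M FF (Mproc n m din dout mk)"
  unfolding martingale_def Mproc_eq'
  using subalg FF_mono Mt_FF_meas Mt_int cond_exp_eq by blast

lemma Mstar_sq_int: "integrable M (\<lambda>w. (Mstar w)^2)"
proof (rule Bochner_Integration.integrable_bound)
  show "integrable M (\<lambda>w. 2 * (Mstar w - Mt 0 w)^2 + 2 * (Mt 0 w)^2)"
  proof -
    have "integrable M (\<lambda>w. Mt 0 w * Mt 0 w)" by (rule int_bdd2[OF Mt_meas Mt_bound Mt_meas Mt_bound])
    then show ?thesis using tail_int[of 0] by (simp add: power2_eq_square)
  qed
  show "(\<lambda>w. (Mstar w)^2) \<in> borel_measurable M" using Mstar_meas by measurable
  show "AE w in M. norm ((Mstar w)^2) \<le> norm (2 * (Mstar w - Mt 0 w)^2 + 2 * (Mt 0 w)^2)"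
  proof (intro AE_I2)
    fix w
    have "(Mstar w)^2 \<le> 2 * (Mstar w - Mt 0 w)^2 + 2 * (Mt 0 w)^2"
      using sum_squares_ge_zero[of "Mstar w - 2 * Mt 0 w" 0]
      by (simp add: power2_eq_square algebra_simps)
    then show "norm ((Mstar w)^2) \<le> norm (2 * (Mstar w - Mt 0 w)^2 + 2 * (Mt 0 w)^2)" by simp
  qed
qed

end

theorem proposition7:
  fixes n :: nat and din dout :: "nat \<Rightarrow> nat"
    and M :: "'a measure" and mk :: "nat list \<Rightarrow> 'a \<Rightarrow> nat"
  defines "m \<equiv> (\<Sum>i\<in>{1..n}. din i)"
  defines "\<rho> \<equiv> (1 / real m) * (\<Sum>i\<in>{1..n}. real (din i) / real (dout i))"
  defines "\<gamma> \<equiv> (1 / real m) * (\<Sum>i\<in>{1..n}. real (din i) ^ 2 / real (dout i))"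
  assumes sums: "(\<Sum>i\<in>{1..n}. dout i) = m"
    and degs: "\<forall>i\<in>{1..n}. din i \<ge> 2 \<and> dout i \<ge> 2"
    and P: "prob_space M"
    and indep: "prob_space.indep_vars M (\<lambda>_. count_space UNIV) mk UNIV"
    and marks_in_V: "\<forall>xs. AE w in M. mk xs w \<in> {1..n}"
    and root_law: "\<forall>i\<in>{1..n}. measure M {w \<in> space M. mk [] w = i} = 1 / real n"
    and child_law: "\<forall>xs i. xs \<noteq> [] \<longrightarrow> i \<in> {1..n} \<longrightarrow>
                      measure M {w \<in> space M. mk xs w = i} = real (dout i) / real m"
  shows "martingale M (nat_filtration M din mk) (Mproc n m din dout mk) \<and>
    (\<exists>Mstar. Mstar \<in> borel_measurable M \<and>
       (AE w in M. (\<lambda>t. Mproc n m din dout mk t w) \<longlonglongrightarrow> Mstar w) \<and>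
       integrable M (\<lambda>w. (Mstar w)^2) \<and>
       (\<forall>t. integrable M (\<lambda>w. (Mstar w - Mproc n m din dout mk t w)^2)) \<and>
       ((\<lambda>t. \<integral>w. (Mstar w - Mproc n m din dout mk t w)^2 \<partial>M) \<longlonglongrightarrow> 0) \<and>
       (\<forall>t. (\<integral>w. (Mstar w - Mproc n m din dout mk t w)^2 \<partial>M)
              = real n * (\<gamma> - 1) * \<rho> ^ t / (real m * (1 - \<rho>))))"
proof -
  interpret B: bp M n m din dout mk
  proof (rule bp.intro)
    show "prob_space M" by (rule P)
    show "bp_axioms M n m din dout mk"
      by (rule bp_axioms.intro) (use sums degs indep marks_in_V root_law child_law m_def in auto)
  qed
  have rr: "\<rho> = B.\<rho>" unfolding \<rho>_def B.\<rho>_def ..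
  have gg: "\<gamma> = B.\<gamma>" unfolding \<gamma>_def B.\<gamma>_def ..
  have Rt: "B.R t = real n * (\<gamma> - 1) * \<rho> ^ t / (real m * (1 - \<rho>))" for t
    unfolding B.R_def B.cc_def rr gg using B.m_pos B.rho_lt1 by (simp add: field_simps)
  have conv: "(\<lambda>t. \<integral>w. (B.Mstar w - B.Mt t w)^2 \<partial>M) \<longlonglongrightarrow> 0"
    unfolding B.tail_eq by (rule B.R_lim)
  show ?thesis
    unfolding B.Mproc_eq'
    using B.martingale_Mproc B.Mstar_meas B.AE_conv B.Mstar_sq_int B.tail_int conv B.tail_eq Rt
    by (intro conjI exI[of _ B.Mstar]) (auto simp: B.Mproc_eq')
qed


end
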